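(* Let $p$ be a nonnegative integer. Every subcubic tree with $p$ leaves contains $\lfloor p/2\rfloor$ pairwise vertex-disjoint leaf-to-leaf paths.
   Context: A graph is subcubic if every vertex has degree at most $3$. A leaf-to-leaf path in a tree is a path whose two endvertices are distinct leaves of the tree. *)

theory Defs
  imports Main
begin

definition graph :: "'a set \<Rightarrow> ('a \<Rightarrow> 'a \<Rightarrow> bool) \<Rightarrow> bool" where
  "graph V E \<equiv> finite V \<and> (\<forall>u v. E u v \<longrightarrow> u \<in> V \<and> v \<in> V)
     \<and> (\<forall>u v. E u v \<longrightarrow> E v u) \<and> (\<forall>v. \<not> E v v)"

definition is_path :: "'a set \<Rightarrow> ('a \<Rightarrow> 'a \<Rightarrow> bool) \<Rightarrow> 'a list \<Rightarrow> bool" where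
  "is_path V E ps \<equiv> ps \<noteq> [] \<and> distinct ps \<and> set ps \<subseteq> V
     \<and> (\<forall>i. i + 1 < length ps \<longrightarrow> E (ps ! i) (ps ! (i + 1)))"

definition connected_graph :: "'a set \<Rightarrow> ('a \<Rightarrow> 'a \<Rightarrow> bool) \<Rightarrow> bool" where
  "connected_graph V E \<equiv> \<forall>u\<in>V. \<forall>v\<in>V. \<exists>ps. is_path V E ps \<and> hd ps = u \<and> last ps = v"

definition is_cycle :: "'a set \<Rightarrow> ('a \<Rightarrow> 'a \<Rightarrow> bool) \<Rightarrow> 'a list \<Rightarrow> bool" where
  "is_cycle V E cs \<equiv> length cs \<ge> 3 \<and> is_path V E cs \<and> E (last cs) (hd cs)"

definition tree :: "'a set \<Rightarrow> ('a \<Rightarrow> 'a \<Rightarrow> bool) \<Rightarrow> bool" where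
  "tree V E \<equiv> graph V E \<and> V \<noteq> {} \<and> connected_graph V E \<and> \<not> (\<exists>cs. is_cycle V E cs)"

definition degree :: "'a set \<Rightarrow> ('a \<Rightarrow> 'a \<Rightarrow> bool) \<Rightarrow> 'a \<Rightarrow> nat" where
  "degree V E v \<equiv> card {u \<in> V. E v u}"

definition subcubic :: "'a set \<Rightarrow> ('a \<Rightarrow> 'a \<Rightarrow> bool) \<Rightarrow> bool" where
  "subcubic V E \<equiv> \<forall>v\<in>V. degree V E v \<le> 3"

definition leaves :: "'a set \<Rightarrow> ('a \<Rightarrow> 'a \<Rightarrow> bool) \<Rightarrow> 'a set" where
  "leaves V E \<equiv> {v \<in> V. degree V E v = 1}"

definition leaf_to_leaf_path :: "'a set \<Rightarrow> ('a \<Rightarrow> 'a \<Rightarrow> bool) \<Rightarrow> 'a list \<Rightarrow> bool" where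
  "leaf_to_leaf_path V E ps \<equiv> is_path V E ps \<and> hd ps \<in> leaves V E \<and> last ps \<in> leaves V E
     \<and> hd ps \<noteq> last ps"

end

theory Submission
  imports Defs
begin

lemma path_succ: "is_path V E ps \<longleftrightarrow> ps \<noteq> [] \<and> distinct ps \<and> set ps \<subseteq> V \<and> successively E ps"
  unfolding is_path_def successively_conv_nth by auto

lemma path_mono: "is_path V E ps \<Longrightarrow> V \<subseteq> W \<Longrightarrow> is_path W E ps"
  unfolding is_path_def by auto

lemma path_restrict: "is_path V E ps \<Longrightarrow> set ps \<subseteq> W \<Longrightarrow> is_path W E ps"
  unfolding is_path_def by auto

lemma cycle_mono: "is_cycle V E cs \<Longrightarrow> V \<subseteq> W \<Longrightarrow> is_cycle W E cs"
  unfolding is_cycle_def using path_mono by blast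

lemma path_cons: "is_path V E ps \<Longrightarrow> l \<notin> set ps \<Longrightarrow> l \<in> W \<Longrightarrow> V \<subseteq> W \<Longrightarrow> E l (hd ps)
   \<Longrightarrow> is_path W E (l # ps)"
  unfolding path_succ by (cases ps) auto

lemma path_snoc: "is_path V E ps \<Longrightarrow> l \<notin> set ps \<Longrightarrow> l \<in> W \<Longrightarrow> V \<subseteq> W \<Longrightarrow> E (last ps) l
   \<Longrightarrow> is_path W E (ps @ [l])"
  unfolding path_succ by (auto simp: successively_append_iff)

lemma degree_remove:
  assumes "finite V" "l \<in> V" "E u l"
  shows "degree (V - {l}) E u = degree V E u - 1"
proof -
  have "{w \<in> V - {l}. E u w} = {w \<in> V. E u w} - {l}" by auto
  thus ?thesis unfolding degree_def using assms by (simp add: card_Diff_singleton)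
qed

lemma degree_mono: "finite V \<Longrightarrow> W \<subseteq> V \<Longrightarrow> degree W E u \<le> degree V E u"
  unfolding degree_def by (rule card_mono) auto

lemma conn_remove:
  assumes fin: "finite V" and conn: "connected_graph V E" and lV: "l \<in> V"
    and deg: "degree V E l \<le> 1" and sym: "\<And>a b. E a b \<Longrightarrow> E b a"
  shows "connected_graph (V - {l}) E"
  unfolding connected_graph_def
proof (intro ballI)
  fix a b assume a: "a \<in> V - {l}" and b: "b \<in> V - {l}"
  then obtain ps where ps: "is_path V E ps" "hd ps = a" "last ps = b"
    using conn unfolding connected_graph_def by blast
  have "l \<notin> set ps"
  proof
    assume "l \<in> set ps"
    then obtain i where i: "i < length ps" "ps ! i = l" by (auto simp: in_set_conv_nth)
    have ne: "ps \<noteq> []" using ps unfolding is_path_def by auto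
    have "i \<noteq> 0"
    proof
      assume "i = 0" hence "hd ps = l" using i ne by (simp add: hd_conv_nth)
      thus False using ps a by auto
    qed
    moreover have "i \<noteq> length ps - 1" using i ps b ne by (auto simp: last_conv_nth)
    ultimately have i1: "Suc i < length ps" "i - 1 < i" using i by auto
    have e1: "E l (ps ! (i+1))" using ps(1) i1 i unfolding is_path_def by auto
    obtain k where k: "i = Suc k" using \<open>i \<noteq> 0\<close> by (cases i) auto
    have e2: "E (ps ! (i-1)) (ps ! i)" using ps(1) i k unfolding is_path_def by auto
    have d: "ps ! (i+1) \<noteq> ps ! (i-1)"
      using ps(1) i1 unfolding is_path_def by (simp add: nth_eq_iff_index_eq)
    have "{ps ! (i+1), ps ! (i-1)} \<subseteq> {w \<in> V. E l w}"
      using e1 e2 sym i ps(1) i1 unfolding is_path_def by auto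
    hence "card {ps ! (i+1), ps ! (i-1)} \<le> degree V E l"
      unfolding degree_def using fin by (intro card_mono) auto
    with d deg show False by simp
  qed
  hence "is_path (V - {l}) E ps" using ps(1) unfolding is_path_def by auto
  thus "\<exists>ps. is_path (V - {l}) E ps \<and> hd ps = a \<and> last ps = b" using ps by blast
qed

lemma acyc_mono: "\<not> (\<exists>cs. is_cycle V E cs) \<Longrightarrow> W \<subseteq> V \<Longrightarrow> \<not> (\<exists>cs. is_cycle W E cs)"
  using cycle_mono by blast

lemma leaf_exists:
  assumes fin: "finite V" and conn: "connected_graph V E"
    and acyc: "\<not> (\<exists>cs. is_cycle V E cs)" and two: "card V \<ge> 2"
    and sym: "\<And>a b. E a b \<Longrightarrow> E b a" and irr: "\<And>a. \<not> E a a"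
  shows "\<exists>l u. l \<in> V \<and> {w \<in> V. E l w} = {u}"
proof -
  have "V \<noteq> {}" using two by (metis card.empty not_numeral_le_zero)
  then obtain a where a: "a \<in> V" by blast
  have "card (V - {a}) \<ge> 1" using two a fin by (simp add: card_Diff_singleton)
  hence "V - {a} \<noteq> {}" by (metis card.empty not_one_le_zero)
  then obtain b where b: "b \<in> V - {a}" by blast
  have ab: "a \<in> V" "b \<in> V" "a \<noteq> b" using a b by auto
  obtain ps0 where ps0: "is_path V E ps0" "hd ps0 = a" "last ps0 = b"
    using conn ab unfolding connected_graph_def by blast
  have bnd: "\<forall>n. (\<exists>ps. is_path V E ps \<and> length ps = n) \<longrightarrow> n \<le> card V"
  proof (intro allI impI)
    fix m assume "\<exists>ps. is_path V E ps \<and> length ps = m"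
    then obtain qs where qs: "is_path V E qs" "length qs = m" by blast
    have "card (set qs) \<le> card V" using qs fin unfolding is_path_def by (intro card_mono) auto
    thus "m \<le> card V" using qs unfolding is_path_def by (simp add: distinct_card)
  qed
  obtain n where n: "\<exists>ps. is_path V E ps \<and> length ps = n"
     "\<forall>m. (\<exists>ps. is_path V E ps \<and> length ps = m) \<longrightarrow> m \<le> n"
    using Nat.ex_has_greatest_nat[of "\<lambda>n. \<exists>ps. is_path V E ps \<and> length ps = n", OF _ bnd] ps0 by blast
  then obtain ps where ps: "is_path V E ps" "length ps = n" by blast
  have "length ps0 \<ge> 2"
  proof (cases ps0)
    case Nil thus ?thesis using ps0 unfolding is_path_def by auto
  next
    case (Cons y ys) thus ?thesis using ps0 ab by (cases ys) auto
  qed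
  moreover have "length ps0 \<le> n" using n(2) ps0(1) by blast
  ultimately have "length ps \<ge> 2" using ps by simp
  then obtain l x rest where psx: "ps = l # x # rest"
  proof -
    from \<open>length ps \<ge> 2\<close> obtain l ys where "ps = l # ys" by (cases ps) auto
    moreover with \<open>length ps \<ge> 2\<close> obtain x rest where "ys = x # rest" by (cases ys) auto
    ultimately show ?thesis using that by blast
  qed
  have lx: "E l x" "l \<in> V" "x \<in> V" using ps(1) psx unfolding path_succ by auto
  have "{w \<in> V. E l w} = {x}"
  proof (intro equalityI subsetI)
    fix w assume w: "w \<in> {w \<in> V. E l w}"
    show "w \<in> {x}"
    proof (cases "w \<in> set ps")
      case False
      have "is_path V E (w # ps)"
        using ps(1) False w sym psx unfolding path_succ by auto
      hence "Suc n \<le> n" using n(2) ps(2) by (metis length_Cons)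
      thus ?thesis by simp
    next
      case True
      then obtain j where j: "j < length ps" "ps ! j = w" by (auto simp: in_set_conv_nth)
      show ?thesis
      proof (cases "j \<ge> 2")
        case False
        then consider "j = 0" | "j = 1" by linarith
        thus ?thesis using j w irr psx by cases auto
      next
        case True
        define cs where "cs = take (Suc j) ps"
        have "ps = cs @ drop (Suc j) ps" unfolding cs_def by simp
        hence "successively E cs" using ps(1) unfolding path_succ
          using successively_append_iff[of E cs "drop (Suc j) ps"] by simp
        moreover have "cs \<noteq> []" "distinct cs" "set cs \<subseteq> V" using ps(1) j unfolding cs_def path_succ
          by (auto dest: in_set_takeD)
        ultimately have "is_path V E cs" unfolding path_succ by auto
        moreover have "length cs \<ge> 3" using True j unfolding cs_def by simp
        moreover have "last cs = w" "hd cs = l" using j psx unfolding cs_def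
          by (auto simp: last_conv_nth)
        ultimately have "is_cycle V E cs" unfolding is_cycle_def using w sym by auto
        thus ?thesis using acyc by blast
      qed
    qed
  next
    fix w assume "w \<in> {x}" thus "w \<in> {w \<in> V. E l w}" using lx by auto
  qed
  thus ?thesis using lx by blast
qed

definition good :: "'a set \<Rightarrow> ('a \<Rightarrow> 'a \<Rightarrow> bool) \<Rightarrow> 'a set \<Rightarrow> 'a list set \<Rightarrow> bool" where
  "good V E S P \<equiv> finite P \<and> (\<forall>ps\<in>P. is_path V E ps \<and> hd ps \<in> S \<and> last ps \<in> S \<and> hd ps \<noteq> last ps)
     \<and> (\<forall>ps\<in>P. \<forall>qs\<in>P. ps \<noteq> qs \<longrightarrow> set ps \<inter> set qs = {})"

lemma good_mono: "good V1 E S P \<Longrightarrow> V1 \<subseteq> V \<Longrightarrow> good V E S P"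
  unfolding good_def using path_mono by blast

lemma gen:
  assumes sym: "\<And>a b. E a b \<Longrightarrow> E b a" and irr: "\<And>a. \<not> E a a"
  shows "finite V \<Longrightarrow> connected_graph V E \<Longrightarrow> \<not> (\<exists>cs. is_cycle V E cs)
    \<Longrightarrow> \<forall>v\<in>V. degree V E v \<le> 3 \<Longrightarrow> S \<subseteq> V \<Longrightarrow> \<forall>v\<in>S. degree V E v \<le> 2
    \<Longrightarrow> \<exists>P. good V E S P \<and> card P = card S div 2"
proof (induction "card V" arbitrary: V S rule: less_induct)
  case less
  note fin = less.prems(1) and conn = less.prems(2) and acyc = less.prems(3)
    and deg3 = less.prems(4) and SV = less.prems(5) and deg2 = less.prems(6)
  show ?case
  proof (cases "card S \<le> 1")
    case True
    hence "card S div 2 = 0" by simp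
    moreover have "good V E S {}" unfolding good_def by simp
    ultimately show ?thesis by (metis card.empty)
  next
    case False
    hence cS: "card S \<ge> 2" by simp
    have "card S \<le> card V" using SV fin by (rule card_mono[rotated])
    hence cV: "card V \<ge> 2" using cS by simp
    obtain l u where lV: "l \<in> V" and N: "{w \<in> V. E l w} = {u}"
      using leaf_exists[OF fin conn acyc cV sym irr] by blast
    have uV: "u \<in> V" and elu: "E l u" using N by auto
    have ul: "u \<noteq> l" using elu irr by auto
    have degl: "degree V E l = 1" unfolding degree_def using N by simp
    define V1 where "V1 = V - {l}"
    have fin1: "finite V1" using fin unfolding V1_def by simp
    have cV1: "card V1 < card V" unfolding V1_def using card_Diff1_less[OF fin lV] .
    have conn1: "connected_graph V1 E" unfolding V1_def
      using conn_remove[OF fin conn lV _ sym] degl by simp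
    have acyc1: "\<not> (\<exists>cs. is_cycle V1 E cs)" using acyc_mono[OF acyc] unfolding V1_def by blast
    have V1V: "V1 \<subseteq> V" unfolding V1_def by auto
    have dm1: "\<And>v. degree V1 E v \<le> degree V E v" using degree_mono[OF fin V1V] by blast
    have deg31: "\<forall>v\<in>V1. degree V1 E v \<le> 3" using deg3 dm1 V1V by (meson le_trans subsetD)
    have degu1: "degree V1 E u = degree V E u - 1" unfolding V1_def
      using degree_remove[OF fin lV] sym elu by blast
    have uV1: "u \<in> V1" unfolding V1_def using uV ul by simp
    consider (a) "l \<notin> S" | (b) "l \<in> S" "u \<notin> S" | (c) "l \<in> S" "u \<in> S" by blast
    then show ?thesis
    proof cases
      case a
      have "S \<subseteq> V1" using SV a unfolding V1_def by auto
      moreover have "\<forall>v\<in>S. degree V1 E v \<le> 2" using deg2 dm1 by (meson le_trans)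
      ultimately obtain P where "good V1 E S P" "card P = card S div 2"
        using less.hyps[OF cV1 fin1 conn1 acyc1 deg31] by blast
      thus ?thesis using good_mono V1V by blast
    next
      case b
      define S' where "S' = insert u (S - {l})"
      have finS: "finite S" using SV fin finite_subset by blast
      have c1: "card (S - {l}) = card S - 1" using b finS by (simp add: card_Diff_singleton)
      have "u \<notin> S - {l}" using b by simp
      hence "card S' = Suc (card (S - {l}))" using finS unfolding S'_def by simp
      hence cS': "card S' = card S" using c1 cS by simp
      have S'V1: "S' \<subseteq> V1" unfolding S'_def V1_def using SV uV ul by auto
      have "degree V E u \<le> 3" using deg3 uV by blast
      hence du: "degree V1 E u \<le> 2" using degu1 by simp
      have "\<forall>v\<in>S'. degree V1 E v \<le> 2"
      proof
        fix v assume v: "v \<in> S'"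
        show "degree V1 E v \<le> 2"
        proof (cases "v = u")
          case True thus ?thesis using du by simp
        next
          case False hence "v \<in> S" using v unfolding S'_def by simp
          thus ?thesis using deg2 dm1[of v] by fastforce
        qed
      qed
      then obtain P' where gP': "good V1 E S' P'" and cP': "card P' = card S' div 2"
        using less.hyps[OF cV1 fin1 conn1 acyc1 deg31 S'V1] by blast
      define f where "f ps = (if hd ps = u then l # ps else if last ps = u then ps @ [l] else ps)" for ps
      have pP: "\<And>ps. ps \<in> P' \<Longrightarrow> is_path V1 E ps \<and> hd ps \<in> S' \<and> last ps \<in> S' \<and> hd ps \<noteq> last ps"
        using gP' unfolding good_def by blast
      have dP: "\<And>ps qs. ps \<in> P' \<Longrightarrow> qs \<in> P' \<Longrightarrow> ps \<noteq> qs \<Longrightarrow> set ps \<inter> set qs = {}"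
        using gP' unfolding good_def by blast
      have lnot: "\<And>ps. ps \<in> P' \<Longrightarrow> l \<notin> set ps"
        using pP unfolding is_path_def V1_def by blast
      have sub1: "\<And>ps. set ps \<subseteq> set (f ps)" unfolding f_def by auto
      have sub2: "\<And>ps. set (f ps) \<subseteq> insert l (set ps)" unfolding f_def by auto
      have ne: "\<And>ps. ps \<in> P' \<Longrightarrow> ps \<noteq> []" using pP unfolding is_path_def by blast
      have lu: "u \<in> set ps" if ps: "ps \<in> P'" and lf: "l \<in> set (f ps)" for ps
      proof -
        have "hd ps = u \<or> last ps = u" using lnot[OF ps] lf unfolding f_def by (auto split: if_splits)
        thus ?thesis using ne[OF ps] hd_in_set last_in_set by metis
      qed
      have inj: "inj_on f P'"
      proof
        fix ps qs assume ps: "ps \<in> P'" and qs: "qs \<in> P'" and eq: "f ps = f qs"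
        show "ps = qs"
        proof (rule ccontr)
          assume "ps \<noteq> qs"
          hence "set ps \<inter> set qs = {}" using dP ps qs by blast
          moreover have "set ps \<subseteq> insert l (set qs)" using sub1[of ps] sub2[of qs] eq by (metis order_trans)
          hence "set ps \<subseteq> set qs" using lnot[OF ps] by blast
          ultimately have "set ps = {}" by (simp add: Int_absorb2)
          thus False using ne[OF ps] by simp
        qed
      qed
      have fP: "finite (f ` P')" using gP' unfolding good_def by simp
      have A: "\<forall>qs \<in> f ` P'. is_path V E qs \<and> hd qs \<in> S \<and> last qs \<in> S \<and> hd qs \<noteq> last qs"
      proof
        fix qs assume "qs \<in> f ` P'"
        then obtain ps where ps: "ps \<in> P'" and qs: "qs = f ps" by blast
        have pp: "is_path V1 E ps" "hd ps \<in> S'" "last ps \<in> S'" "hd ps \<noteq> last ps" using pP[OF ps] by auto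
        have ln: "l \<notin> set ps" using lnot[OF ps] .
        have nps: "ps \<noteq> []" using ne[OF ps] .
        have hl: "hd ps \<noteq> l" "last ps \<noteq> l" using ln nps by auto
        show "is_path V E qs \<and> hd qs \<in> S \<and> last qs \<in> S \<and> hd qs \<noteq> last qs"
        proof (cases "hd ps = u")
          case True
          have "qs = l # ps" using qs True unfolding f_def by simp
          moreover have "is_path V E (l # ps)" using path_cons[OF pp(1) ln lV V1V] True elu by simp
          moreover have "last ps \<in> S" using pp True hl unfolding S'_def by auto
          ultimately show ?thesis using b nps hl by auto
        next
          case False
          show ?thesis
          proof (cases "last ps = u")
            case True
            have "qs = ps @ [l]" using qs True False unfolding f_def by simp
            moreover have "is_path V E (ps @ [l])" using path_snoc[OF pp(1) ln lV V1V] True sym elu by simp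
            moreover have "hd ps \<in> S" using pp False hl unfolding S'_def by auto
            ultimately show ?thesis using b nps hl by auto
          next
            case F2: False
            have "qs = ps" using qs F2 False unfolding f_def by simp
            moreover have "is_path V E ps" using path_mono[OF pp(1) V1V] .
            moreover have "hd ps \<in> S" "last ps \<in> S" using pp False F2 hl unfolding S'_def by auto
            ultimately show ?thesis using pp by auto
          qed
        qed
      qed
      have B: "\<forall>qs \<in> f ` P'. \<forall>rs \<in> f ` P'. qs \<noteq> rs \<longrightarrow> set qs \<inter> set rs = {}"
      proof (intro ballI impI)
        fix qs rs assume "qs \<in> f ` P'" "rs \<in> f ` P'" "qs \<noteq> rs"
        then obtain ps ps' where ps: "ps \<in> P'" "qs = f ps" and ps': "ps' \<in> P'" "rs = f ps'" by blast
        have neq: "ps \<noteq> ps'" using \<open>qs \<noteq> rs\<close> ps ps' by blast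
        have dj: "set ps \<inter> set ps' = {}" using dP[OF ps(1) ps'(1) neq] .
        show "set qs \<inter> set rs = {}"
        proof (rule ccontr)
          assume "set qs \<inter> set rs \<noteq> {}"
          then obtain x where x: "x \<in> set (f ps)" "x \<in> set (f ps')" using ps ps' by blast
          show False
          proof (cases "x = l")
            case True
            thus False using lu[OF ps(1)] lu[OF ps'(1)] x dj by blast
          next
            case False
            thus False using x sub2[of ps] sub2[of ps'] dj by blast
          qed
        qed
      qed
      have good: "good V E S (f ` P')" unfolding good_def using fP A B by blast
      have "card (f ` P') = card S div 2" using card_image[OF inj] cP' cS' by simp
      thus ?thesis using good by blast
    next
      case c
      define V2 where "V2 = V1 - {u}"
      show ?thesis
      proof (cases "V2 = {}")
        case True
        have VV: "V = {l, u}" using True lV uV unfolding V2_def V1_def by auto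
        have SS: "S = {l, u}" using SV c VV by auto
        have "is_path V E [l, u]" unfolding path_succ using ul elu lV uV by auto
        hence "good V E S {[l, u]}" unfolding good_def using SS ul by auto
        moreover have "card {[l,u]} = card S div 2" using SS ul by simp
        ultimately show ?thesis by blast
      next
        case False
        have fin2: "finite V2" using fin1 unfolding V2_def by simp
        have cV2: "card V2 < card V" unfolding V2_def using card_Diff1_less[OF fin1 uV1] cV1 by (rule less_trans)
        have "degree V E u \<le> 2" using deg2 c by blast
        hence du1: "degree V1 E u \<le> 1" using degu1 by simp
        have conn2: "connected_graph V2 E" unfolding V2_def
          using conn_remove[OF fin1 conn1 uV1 du1 sym] .
        have V2V: "V2 \<subseteq> V" unfolding V2_def V1_def by auto
        have acyc2: "\<not> (\<exists>cs. is_cycle V2 E cs)" using acyc_mono[OF acyc V2V] .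
        have dm2: "\<And>v. degree V2 E v \<le> degree V E v" using degree_mono[OF fin V2V] by blast
        have deg32: "\<forall>v\<in>V2. degree V2 E v \<le> 3" using deg3 dm2 V2V by (meson le_trans subsetD)
        define S2 where "S2 = S - {l, u}"
        have S2V: "S2 \<subseteq> V2" using SV unfolding S2_def V2_def V1_def by auto
        have deg22: "\<forall>v\<in>S2. degree V2 E v \<le> 2" using deg2 dm2 unfolding S2_def by (meson DiffD1 le_trans)
        obtain P2 where gP2: "good V2 E S2 P2" and cP2: "card P2 = card S2 div 2"
          using less.hyps[OF cV2 fin2 conn2 acyc2 deg32 S2V deg22] by blast
        have finS: "finite S" using SV fin finite_subset by blast
        have cS2: "card S2 = card S - 2" unfolding S2_def using c ul finS
          by (simp add: card_Diff_subset)
        have pl: "is_path V E [l, u]" unfolding path_succ using ul elu lV uV by auto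
        have P2sub: "\<And>ps. ps \<in> P2 \<Longrightarrow> set ps \<subseteq> V2" using gP2 unfolding good_def is_path_def by blast
        have notin: "[l, u] \<notin> P2"
        proof
          assume "[l, u] \<in> P2" hence "l \<in> V2" using P2sub[of "[l,u]"] by simp
          thus False unfolding V2_def V1_def by auto
        qed
        have fP2: "finite (insert [l, u] P2)" using gP2 unfolding good_def by simp
        have A2: "\<forall>ps \<in> insert [l, u] P2. is_path V E ps \<and> hd ps \<in> S \<and> last ps \<in> S \<and> hd ps \<noteq> last ps"
        proof
          fix ps assume "ps \<in> insert [l, u] P2"
          thus "is_path V E ps \<and> hd ps \<in> S \<and> last ps \<in> S \<and> hd ps \<noteq> last ps"
            using pl c ul gP2 path_mono[OF _ V2V] unfolding good_def S2_def by auto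
        qed
        have B2: "\<forall>ps \<in> insert [l, u] P2. \<forall>qs \<in> insert [l, u] P2. ps \<noteq> qs \<longrightarrow> set ps \<inter> set qs = {}"
        proof (intro ballI impI)
          fix ps qs assume ps: "ps \<in> insert [l, u] P2" and qs: "qs \<in> insert [l, u] P2" and "ps \<noteq> qs"
          have lu2: "l \<notin> V2" "u \<notin> V2" unfolding V2_def V1_def by auto
          show "set ps \<inter> set qs = {}"
          proof -
            have nl: "\<And>rs. rs \<in> P2 \<Longrightarrow> l \<notin> set rs \<and> u \<notin> set rs" using P2sub lu2 by blast
            show ?thesis using ps qs \<open>ps \<noteq> qs\<close> gP2 nl unfolding good_def by fastforce
          qed
        qed
        have "good V E S (insert [l,u] P2)" unfolding good_def using fP2 A2 B2 by blast
        moreover have "card (insert [l,u] P2) = card S div 2"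
          using notin gP2 cP2 cS2 cS unfolding good_def by simp
        ultimately show ?thesis by blast
      qed
    qed
  qed
qed

theorem lemma5:
  fixes V :: "'a set" and E :: "'a \<Rightarrow> 'a \<Rightarrow> bool" and p :: nat
  assumes "tree V E" and "subcubic V E" and "card (leaves V E) = p"
  shows "\<exists>P :: 'a list set. finite P \<and> card P = p div 2
           \<and> (\<forall>ps\<in>P. leaf_to_leaf_path V E ps)
           \<and> (\<forall>ps\<in>P. \<forall>qs\<in>P. ps \<noteq> qs \<longrightarrow> set ps \<inter> set qs = {})"
proof -
  have g: "graph V E" and c: "connected_graph V E" and a: "\<not> (\<exists>cs. is_cycle V E cs)"
    using assms(1) unfolding tree_def by auto
  have fin: "finite V" and sym: "\<And>a b. E a b \<Longrightarrow> E b a" and irr: "\<And>a. \<not> E a a"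
    using g unfolding graph_def by auto
  have d3: "\<forall>v\<in>V. degree V E v \<le> 3" using assms(2) unfolding subcubic_def .
  have LV: "leaves V E \<subseteq> V" unfolding leaves_def by auto
  have d2: "\<forall>v\<in>leaves V E. degree V E v \<le> 2" unfolding leaves_def by auto
  obtain P where "good V E (leaves V E) P" "card P = card (leaves V E) div 2"
    using gen[OF sym irr fin c a d3 LV d2] by blast
  thus ?thesis using assms(3) unfolding good_def leaf_to_leaf_path_def by blast
qed

end
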